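(* Let $\mathcal U_1,\mathcal U_2$ be essential covers of $X$, let $f\colon X\to X$ be a map, and let $\mathcal F_1\colon\mathcal U_1\multimap\mathcal U_1$ be a representation of $f$. If $\mathcal R^-(\mathcal U_2)>\mathcal R^+(\mathcal F_1)$, then every representation $\mathcal F_2\colon\mathcal U_2\multimap\mathcal U_2$ of $f$ is coarser than $\mathcal F_1$ (i.e. $\mathcal F_1$ is finer than $\mathcal F_2$).
   Context: $X$ is a nonempty metric space with bounded metric $d$; $B(x,r)=\{y\in X:d(x,y)<r\}$ for $r>0$ and $B(x,0)=\{x\}$. For a family $\mathcal A$ of subsets of $X$, $|\mathcal A|:=\bigcup_{A\in\mathcal A}A$. A cover of $X$ is a finite family $\mathcal U$ of open subsets of $X$ with $|\mathcal U|=X$. A cover $\mathcal U$ is essential if there is $\varepsilon>0$ such that every $U\in\mathcal U$ contains a point $x$ with $B(x,\varepsilon)\subset U$ and $B(x,\varepsilon)\cap W=\emptyset$ for all $W\in\mathcal U\setminus\{U\}$. Inner resolution: $\mathcal R^-(\mathcal U)=\sup\{d\ge0:\forall x\in X\ \exists U\in\mathcal U:\ B(x,d)\subset U\}$. $\mathcal U_1\prec\mathcal U_2$ means every element of $\mathcal U_1$ is contained in some element of $\mathcal U_2$ and every element of $\mathcal U_2$ contains some element of $\mathcal U_1$. A combinatorial map $\mathcal F\colon\mathcal U\multimap\mathcal U$ assigns to each $U\in\mathcal U$ a subset $\mathcal F(U)\subset\mathcal U$; it is a representation of $f$ if $\mathcal F(U)\supseteq\{W\in\mathcal U:W\cap f(U)\neq\emptyset\}$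 for all $U$. $\mathcal R^+(\mathcal F)=\max\{\operatorname{diam}U,\operatorname{diam}|\mathcal F(U)|:U\in\mathcal U\}$. $\mathcal F_1\colon\mathcal U_1\multimap\mathcal U_1$ is finer than $\mathcal F_2\colon\mathcal U_2\multimap\mathcal U_2$ if $\mathcal U_1\prec\mathcal U_2$ and for every $U_1\in\mathcal U_1$ and every $U_2\in\mathcal U_2$ with $U_1\subset U_2$, every element of $\mathcal F_1(U_1)$ is contained in some element of $\mathcal F_2(U_2)$. *)

theory Defs
  imports "HOL-Analysis.Analysis"
begin

definition Bl :: "'a::metric_space \<Rightarrow> real \<Rightarrow> 'a set" where
  "Bl x r = (if r = 0 then {x} else ball x r)"

definition fam_union :: "'a set set \<Rightarrow> 'a set" where
  "fam_union A = \<Union>A"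

definition is_cover :: "'a::metric_space set set \<Rightarrow> bool" where
  "is_cover \<U> \<longleftrightarrow> finite \<U> \<and> (\<forall>U\<in>\<U>. open U) \<and> fam_union \<U> = UNIV"

definition essential_cover :: "'a::metric_space set set \<Rightarrow> bool" where
  "essential_cover \<U> \<longleftrightarrow> is_cover \<U> \<and>
     (\<exists>\<epsilon>>0. \<forall>U\<in>\<U>. \<exists>x. Bl x \<epsilon> \<subseteq> U \<and> (\<forall>W\<in>\<U> - {U}. Bl x \<epsilon> \<inter> W = {}))"

text \<open>Inner resolution, valued in the extended reals (it may be +\<infinity>).\<close>
definition inner_res :: "'a::metric_space set set \<Rightarrow> ereal" where
  "inner_res \<U> = Sup (ereal ` {d. d \<ge> 0 \<and> (\<forall>x. \<exists>U\<in>\<U>. Bl x d \<subseteq> U)})"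

definition cover_prec :: "'a set set \<Rightarrow> 'a set set \<Rightarrow> bool" where
  "cover_prec \<U>1 \<U>2 \<longleftrightarrow> (\<forall>U1\<in>\<U>1. \<exists>U2\<in>\<U>2. U1 \<subseteq> U2) \<and> (\<forall>U2\<in>\<U>2. \<exists>U1\<in>\<U>1. U1 \<subseteq> U2)"

definition comb_map :: "'a set set \<Rightarrow> ('a set \<Rightarrow> 'a set set) \<Rightarrow> bool" where
  "comb_map \<U> F \<longleftrightarrow> (\<forall>U\<in>\<U>. F U \<subseteq> \<U>)"

definition is_representation :: "'a set set \<Rightarrow> ('a set \<Rightarrow> 'a set set) \<Rightarrow> ('a \<Rightarrow> 'a) \<Rightarrow> bool" where
  "is_representation \<U> F f \<longleftrightarrow> comb_map \<U> F \<and>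
     (\<forall>U\<in>\<U>. {W\<in>\<U>. W \<inter> f ` U \<noteq> {}} \<subseteq> F U)"

definition outer_res :: "'a::metric_space set set \<Rightarrow> ('a set \<Rightarrow> 'a set set) \<Rightarrow> real" where
  "outer_res \<U> F = Max ((\<lambda>U. diameter U) ` \<U> \<union> (\<lambda>U. diameter (fam_union (F U))) ` \<U>)"

definition finer :: "'a set set \<Rightarrow> ('a set \<Rightarrow> 'a set set) \<Rightarrow> 'a set set \<Rightarrow> ('a set \<Rightarrow> 'a set set) \<Rightarrow> bool" where
  "finer \<U>1 F1 \<U>2 F2 \<longleftrightarrow> cover_prec \<U>1 \<U>2 \<and>
     (\<forall>U1\<in>\<U>1. \<forall>U2\<in>\<U>2. U1 \<subseteq> U2 \<longrightarrow> (\<forall>V\<in>F1 U1. \<exists>W\<in>F2 U2. V \<subseteq> W))"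

end

theory Submission
  imports Defs
begin

lemma Bl_center: "x \<in> Bl x e \<longleftrightarrow> True" if "e \<ge> 0" for x :: "'a::metric_space"
  using that by (auto simp: Bl_def)

theorem mainTheorem4:
  fixes \<U>1 \<U>2 :: "'a::metric_space set set"
    and f :: "'a \<Rightarrow> 'a"
    and F1 :: "'a set \<Rightarrow> 'a set set"
  assumes bdd: "bounded (UNIV :: 'a set)"
    and ess1: "essential_cover \<U>1"
    and ess2: "essential_cover \<U>2"
    and rep1: "is_representation \<U>1 F1 f"
    and res: "inner_res \<U>2 > ereal (outer_res \<U>1 F1)"
  shows "\<forall>F2. is_representation \<U>2 F2 f \<longrightarrow> finer \<U>1 F1 \<U>2 F2"
proof -
  define R where "R = outer_res \<U>1 F1"
  obtain d where d0: "d \<ge> 0" and dcov: "\<forall>x. \<exists>U\<in>\<U>2. Bl x d \<subseteq> U" and Rd: "R < d"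
    using res unfolding inner_res_def R_def by (auto simp: less_Sup_iff)
  have fin1: "finite \<U>1" and un1: "\<Union>\<U>1 = UNIV" using ess1
    by (auto simp: essential_cover_def is_cover_def fam_union_def)
  have un2: "\<Union>\<U>2 = UNIV" using ess2
    by (auto simp: essential_cover_def is_cover_def fam_union_def)
  have diamU: "diameter U \<le> R" if "U \<in> \<U>1" for U
    unfolding R_def outer_res_def using that fin1 by (intro Max_ge) auto
  have diamF: "diameter (\<Union>(F1 U)) \<le> R" if "U \<in> \<U>1" for U
    unfolding R_def outer_res_def using that fin1 by (intro Max_ge) (auto simp: fam_union_def)
  have small: "\<exists>W\<in>\<U>2. S \<subseteq> W" if "diameter S \<le> R" "x \<in> S" for S x
  proof -
    obtain W where W: "W \<in> \<U>2" "Bl x d \<subseteq> W" using dcov by blast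
    have "S \<subseteq> Bl x d"
    proof
      fix y assume "y \<in> S"
      have "dist x y \<le> diameter S"
        by (rule diameter_bounded_bound[OF bounded_subset[OF bdd]]) (use that \<open>y\<in>S\<close> in auto)
      with that Rd have "dist x y < d" by linarith
      thus "y \<in> Bl x d" using Rd d0 by (auto simp: Bl_def)
    qed
    with W show ?thesis by blast
  qed
  have smallx: "\<exists>W\<in>\<U>2. S \<subseteq> W \<and> x \<in> W" if "diameter S \<le> R" "x \<in> S" for S x
    using small[OF that] that by blast
  have ne1: "U \<noteq> {}" if UU: "U \<in> \<U>1" for U
  proof -
    have "\<exists>e>0. \<forall>U\<in>\<U>1. \<exists>x. Bl x e \<subseteq> U" using ess1 unfolding essential_cover_def by force
    then obtain e where e: "e > 0" "\<forall>U\<in>\<U>1. \<exists>x. Bl x e \<subseteq> U" by blast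
    then obtain x where "Bl x e \<subseteq> U" using bspec[OF e(2) UU] by (elim exE)
    moreover have "x \<in> Bl x e" using e by (simp add: Bl_def)
    ultimately show ?thesis by blast
  qed
  have U1ne: "\<U>1 \<noteq> {}" using un1 by auto
  have U2ne: "\<U>2 \<noteq> {}" using un2 by auto
  have prec: "cover_prec \<U>1 \<U>2"
    unfolding cover_prec_def
  proof safe
    fix U assume U: "U \<in> \<U>1"
    then obtain x where "x \<in> U" using ne1[OF U] by blast
    thus "\<exists>U2\<in>\<U>2. U \<subseteq> U2" using small[OF diamU[OF U]] by blast
  next
    fix U assume U: "U \<in> \<U>2"
    obtain e where e: "e > 0" "\<forall>U\<in>\<U>2. \<exists>x. Bl x e \<subseteq> U \<and> (\<forall>W\<in>\<U>2 - {U}. Bl x e \<inter> W = {})"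
      using ess2 by (auto simp: essential_cover_def)
    then obtain x where x: "Bl x e \<subseteq> U" "\<forall>W\<in>\<U>2 - {U}. Bl x e \<inter> W = {}" using U by blast
    have xe: "x \<in> Bl x e" using e by (auto simp: Bl_def)
    have "x \<in> \<Union>\<U>1" using un1 by simp
    then obtain V where V: "V \<in> \<U>1" "x \<in> V" by blast
    obtain W where W: "W \<in> \<U>2" "V \<subseteq> W" using small[OF diamU[OF V(1)] V(2)] by blast
    have "W = U"
    proof (rule ccontr)
      assume "W \<noteq> U"
      hence "Bl x e \<inter> W = {}" using x(2) W(1) by blast
      moreover have "x \<in> W" using V W by blast
      ultimately show False using xe by blast
    qed
    thus "\<exists>U1\<in>\<U>1. U1 \<subseteq> U" using V W by blast
  qed
  show ?thesis
  proof (intro allI impI)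
    fix F2 assume rep2: "is_representation \<U>2 F2 f"
    show "finer \<U>1 F1 \<U>2 F2"
      unfolding finer_def
    proof (intro conjI prec ballI impI)
      fix U1 U2 V assume U1: "U1 \<in> \<U>1" and U2: "U2 \<in> \<U>2" and sub: "U1 \<subseteq> U2" and V: "V \<in> F1 U1"
      obtain y where y: "y \<in> U1" using ne1[OF U1] by blast
      have "f y \<in> \<Union>\<U>1" using un1 by simp
      then obtain V' where V': "V' \<in> \<U>1" "f y \<in> V'" by blast
      have "V' \<in> F1 U1" using rep1 U1 V' y unfolding is_representation_def by blast
      hence "f y \<in> \<Union>(F1 U1)" using V' by blast
      then obtain W where W: "W \<in> \<U>2" "\<Union>(F1 U1) \<subseteq> W" "f y \<in> W"
        using smallx[OF diamF[OF U1]] by blast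
      have "W \<in> F2 U2" using rep2 U2 W y sub unfolding is_representation_def by blast
      moreover have "V \<subseteq> W" using V W by blast
      ultimately show "\<exists>W\<in>F2 U2. V \<subseteq> W" by blast
    qed
  qed
qed

end
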